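(* Let $G$ be a simple connected bipartite graph on $n\ge 3$ vertices with maximum degree $\Delta\le n-2$, and let $S=\sum_{j=1}^{n}D_j$. Suppose $\deg(v_1)=\cdots=\deg(v_k)=\Delta$, and for $1\le i\le k$ let $a_i=(\Delta+1)(S-2D_i-2t_{v_i}\Delta)+2n\Delta^{2}$ and $b_i=D_i^{2}-2S\Delta^{2}+2D_it_{v_i}\Delta+t_{v_i}^{2}\Delta^{2}$. Then (i) $\displaystyle \rho^{\mathcal{D}}(G)\ge \max_{1\le i\le k}\frac{a_i+\sqrt{a_i^{2}+4b_i(1+\Delta)(n-\Delta-1)}}{2(1+\Delta)(n-\Delta-1)}$; (ii) $\displaystyle \rho^{\mathcal{D}}_{min}(G)\le \min_{1\le i\le k}\frac{a_i-\sqrt{a_i^{2}+4b_i(1+\Delta)(n-\Delta-1)}}{2(1+\Delta)(n-\Delta-1)}$.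
   Context: $G$ has vertex set $\{v_1,\dots,v_n\}$; $d_G(u,v)$ denotes the distance in $G$. The distance matrix is $\mathcal{D}(G)=(d_G(v_i,v_j))$. The transmission of $v_i$ is $D_i=\sum_{j\ne i}d_G(v_i,v_j)$. For a vertex $v$ of degree $d_v$, $t_v=\frac{1}{d_v}\sum_{v_j\sim v}D_j$. $\rho^{\mathcal{D}}(G)$ and $\rho^{\mathcal{D}}_{min}(G)$ are the largest and least eigenvalues of $\mathcal{D}(G)$. *)

theory Defs
  imports "Jordan_Normal_Form.Char_Poly"
begin

definition simple_graph :: "nat \<Rightarrow> (nat \<Rightarrow> nat \<Rightarrow> bool) \<Rightarrow> bool" where
  "simple_graph n E \<longleftrightarrow> (\<forall>u v. E u v \<longrightarrow> u < n \<and> v < n \<and> u \<noteq> v \<and> E v u)"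

definition is_walk :: "(nat \<Rightarrow> nat \<Rightarrow> bool) \<Rightarrow> nat list \<Rightarrow> bool" where
  "is_walk E xs \<longleftrightarrow> xs \<noteq> [] \<and> (\<forall>i. Suc i < length xs \<longrightarrow> E (xs ! i) (xs ! Suc i))"

definition connected_graph :: "nat \<Rightarrow> (nat \<Rightarrow> nat \<Rightarrow> bool) \<Rightarrow> bool" where
  "connected_graph n E \<longleftrightarrow>
     (\<forall>u<n. \<forall>v<n. \<exists>xs. is_walk E xs \<and> hd xs = u \<and> last xs = v)"

definition bipartite_graph :: "nat \<Rightarrow> (nat \<Rightarrow> nat \<Rightarrow> bool) \<Rightarrow> bool" where
  "bipartite_graph n E \<longleftrightarrow> (\<exists>A. \<forall>u<n. \<forall>v<n. E u v \<longrightarrow> (u \<in> A \<longleftrightarrow> v \<notin> A))"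

definition gdist :: "(nat \<Rightarrow> nat \<Rightarrow> bool) \<Rightarrow> nat \<Rightarrow> nat \<Rightarrow> nat" where
  "gdist E u v = (LEAST k. \<exists>xs. is_walk E xs \<and> length xs = Suc k \<and> hd xs = u \<and> last xs = v)"

definition degree :: "nat \<Rightarrow> (nat \<Rightarrow> nat \<Rightarrow> bool) \<Rightarrow> nat \<Rightarrow> nat" where
  "degree n E v = card {u. u < n \<and> E v u}"

definition max_degree :: "nat \<Rightarrow> (nat \<Rightarrow> nat \<Rightarrow> bool) \<Rightarrow> nat" where
  "max_degree n E = Max (degree n E ` {0..<n})"

text \<open>Transmission D_v = sum of distances from v.\<close>
definition transmission :: "nat \<Rightarrow> (nat \<Rightarrow> nat \<Rightarrow> bool) \<Rightarrow> nat \<Rightarrow> real" where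
  "transmission n E v = (\<Sum>j\<in>{0..<n} - {v}. real (gdist E v j))"

definition tval :: "nat \<Rightarrow> (nat \<Rightarrow> nat \<Rightarrow> bool) \<Rightarrow> nat \<Rightarrow> real" where
  "tval n E v = (\<Sum>u\<in>{u. u < n \<and> E v u}. transmission n E u) / real (degree n E v)"

definition dist_matrix :: "nat \<Rightarrow> (nat \<Rightarrow> nat \<Rightarrow> bool) \<Rightarrow> real mat" where
  "dist_matrix n E = mat n n (\<lambda>(i, j). real (gdist E i j))"

definition rhoD :: "nat \<Rightarrow> (nat \<Rightarrow> nat \<Rightarrow> bool) \<Rightarrow> real" where
  "rhoD n E = Max {k. eigenvalue (dist_matrix n E) k}"

definition rhoD_min :: "nat \<Rightarrow> (nat \<Rightarrow> nat \<Rightarrow> bool) \<Rightarrow> real" where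
  "rhoD_min n E = Min {k. eigenvalue (dist_matrix n E) k}"

end

theory Submission
  imports Defs "HOL-Analysis.Function_Topology" Complex_Main
begin


definition qf :: "(nat \<Rightarrow> nat \<Rightarrow> real) \<Rightarrow> nat \<Rightarrow> (nat \<Rightarrow> real) \<Rightarrow> real" where
  "qf a n f = (\<Sum>i<n. \<Sum>j<n. a i j * f i * f j)"

definition nf :: "nat \<Rightarrow> (nat \<Rightarrow> real) \<Rightarrow> real" where
  "nf n f = (\<Sum>i<n. (f i)^2)"

definition bil :: "(nat \<Rightarrow> nat \<Rightarrow> real) \<Rightarrow> nat \<Rightarrow> (nat \<Rightarrow> real) \<Rightarrow> (nat \<Rightarrow> real) \<Rightarrow> real" where
  "bil a n f h = (\<Sum>i<n. \<Sum>j<n. a i j * f i * h j)"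

lemma compact_box:
  "compact {f :: nat \<Rightarrow> real. \<forall>i. f i \<in> (if i < n then {-1..1} else {0})}"
proof -
  have eq: "{f :: nat \<Rightarrow> real. \<forall>i. f i \<in> (if i < n then {-1..1} else {0})}
      = PiE UNIV (\<lambda>i. if i < n then {-1..1::real} else {0})"
    by (auto simp: PiE_def Pi_def)
  have "compactin (product_topology (\<lambda>i. euclidean) UNIV) (PiE UNIV (\<lambda>i. if i < n then {-1..1::real} else {0}))"
    by (subst compactin_PiE) auto
  then show ?thesis unfolding eq euclidean_product_topology by simp
qed

lemma cont_qf: "continuous_on UNIV (qf a n)"
  unfolding qf_def by (intro continuous_intros continuous_on_product_coordinates)

lemma cont_nf: "continuous_on UNIV (nf n)"
  unfolding nf_def by (intro continuous_intros continuous_on_product_coordinates)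

lemma qf_expand:
  assumes sym: "\<And>i j. i < n \<Longrightarrow> j < n \<Longrightarrow> a i j = a j i"
  shows "qf a n (\<lambda>i. g i + t * h i) = qf a n g + 2 * t * bil a n g h + t^2 * qf a n h"
proof -
  have swap: "(\<Sum>i<n. \<Sum>j<n. a i j * h i * g j) = bil a n g h"
    unfolding bil_def
    by (subst sum.swap) (intro sum.cong refl, simp add: sym mult_ac)
  have "qf a n (\<lambda>i. g i + t * h i) = (\<Sum>i<n. \<Sum>j<n. a i j * g i * g j + t * (a i j * g i * h j)
       + t * (a i j * h i * g j) + t^2 * (a i j * h i * h j))"
    unfolding qf_def by (intro sum.cong refl) (simp add: algebra_simps power2_eq_square)
  also have "\<dots> = qf a n g + t * bil a n g h + t * (\<Sum>i<n. \<Sum>j<n. a i j * h i * g j) + t^2 * qf a n h"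
    unfolding qf_def bil_def by (simp add: sum.distrib sum_distrib_left)
  finally show ?thesis using swap by simp
qed

lemma nf_expand:
  "nf n (\<lambda>i. g i + t * h i) = nf n g + 2 * t * (\<Sum>i<n. g i * h i) + t^2 * nf n h"
  unfolding nf_def by (simp add: power2_eq_square algebra_simps sum.distrib sum_distrib_left)

lemma quad_nonneg_zero:
  fixes c d :: real
  assumes "\<And>t. 0 \<le> 2 * t * c + t^2 * d" 
  shows "c = 0"
proof -
  have d: "d \<ge> 0" using assms[of 1] assms[of "-1"] by simp
  have "0 \<le> 2 * (-c/(d+1)) * c + (-c/(d+1))^2 * d" by (rule assms)
  also have "\<dots> = -(c^2 * (d + 2) / (d+1)^2)"
    using d by (simp add: divide_simps power2_eq_square) (simp add: algebra_simps)
  finally have "c^2 * (d+2) / (d+1)^2 \<le> 0" by simp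
  moreover have "c^2 * (d+2) / (d+1)^2 \<ge> 0" using d by simp
  ultimately have "c^2 * (d+2) / (d+1)^2 = 0" by linarith
  then show ?thesis using d by simp
qed

lemma max_eig_fun:
  fixes a :: "nat \<Rightarrow> nat \<Rightarrow> real"
  assumes sym: "\<And>i j. i < n \<Longrightarrow> j < n \<Longrightarrow> a i j = a j i" and n: "n > 0"
  shows "\<exists>\<mu> g. (\<exists>k<n. g k \<noteq> 0) \<and> (\<forall>k<n. (\<Sum>j<n. a k j * g j) = \<mu> * g k)
            \<and> (\<forall>f. qf a n f \<le> \<mu> * nf n f)"
proof -
  define T where "T = {f :: nat \<Rightarrow> real. \<forall>i. f i \<in> (if i < n then {-1..1} else {0})}"
  define Ks where "Ks = T \<inter> {f. nf n f = 1}"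
  have "closed {f. nf n f = 1}"
    by (rule closed_Collect_eq) (auto intro: cont_nf)
  then have cK: "compact Ks" unfolding Ks_def T_def by (intro compact_Int_closed compact_box)
  have sq: "(\<lambda>i::nat. (if i = 0 then 1 else 0::real)^2) = (\<lambda>i. if i = 0 then 1 else 0)" by auto
  have s1: "(\<Sum>i<n. (if i = 0 then 1 else 0::real)^2) = (\<Sum>i<n. (if i = 0 then 1 else 0::real))"
    by (rule sum.cong) auto
  have s2: "(\<Sum>i<n. (if i = 0 then 1 else 0::real)) = 1" using n by (subst sum.delta) auto
  have "(\<lambda>i. if i = 0 then 1 else 0) \<in> Ks"
    unfolding Ks_def T_def nf_def using n s1 s2 by auto
  then have neK: "Ks \<noteq> {}" by auto
  obtain g where gK: "g \<in> Ks" and gmax: "\<forall>f\<in>Ks. qf a n f \<le> qf a n g"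
    using continuous_attains_sup[OF cK neK continuous_on_subset[OF cont_qf[of a n]]] by auto
  define \<mu> where "\<mu> = qf a n g"
  have ng: "nf n g = 1" using gK unfolding Ks_def by simp
  have bound: "qf a n f \<le> \<mu> * nf n f" for f
  proof (cases "nf n f = 0")
    case True
    then have "\<forall>i\<in>{..<n}. (f i)^2 = 0" unfolding nf_def
      by (subst sum_nonneg_eq_0_iff[symmetric]) auto
    then have "qf a n f = 0" unfolding qf_def by simp
    then show ?thesis using True by simp
  next
    case False
    have nn: "nf n f \<ge> 0" unfolding nf_def by (auto intro: sum_nonneg)
    define s where "s = sqrt (nf n f)"
    have s: "s > 0" "s^2 = nf n f" using False nn unfolding s_def by auto
    define h where "h i = (if i < n then f i / s else 0)" for i
    have "nf n h = nf n f / s^2" unfolding nf_def h_def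
      by (simp add: power_divide sum_divide_distrib)
    then have nh: "nf n h = 1" using s False by simp
    have "h \<in> T" unfolding T_def
    proof (intro CollectI allI)
      fix i show "h i \<in> (if i < n then {-1..1} else {0})"
      proof (cases "i < n")
        case True
        have "(f i)^2 \<le> nf n f" unfolding nf_def
          by (rule member_le_sum) (use True in auto)
        then have "(f i / s)^2 \<le> 1" using s nn by (simp add: power_divide divide_le_eq)
        then have "\<bar>f i / s\<bar> \<le> 1" by (metis abs_le_square_iff abs_one power_one)
        then show ?thesis using True unfolding h_def by (auto simp del: abs_divide simp: abs_le_iff)
      qed (simp add: h_def)
    qed
    then have "h \<in> Ks" using nh unfolding Ks_def by simp
    then have "qf a n h \<le> \<mu>" using gmax unfolding \<mu>_def by auto
    moreover have "qf a n h = qf a n f / s^2" unfolding qf_def h_def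
      by (simp add: sum_divide_distrib power2_eq_square)
    ultimately have "qf a n f / s^2 \<le> \<mu>" by simp
    then show ?thesis using s nn False by (simp add: divide_le_eq mult.commute)
  qed
  have eig: "(\<Sum>j<n. a k j * g j) = \<mu> * g k" if k: "k < n" for k
  proof -
    define h where "h i = (if i = k then 1 else (0::real))" for i
    define c where "c = \<mu> * (\<Sum>i<n. g i * h i) - bil a n g h"
    define d where "d = \<mu> * nf n h - qf a n h"
    have "0 \<le> 2 * t * c + t^2 * d" for t
    proof -
      have "0 \<le> \<mu> * nf n (\<lambda>i. g i + t * h i) - qf a n (\<lambda>i. g i + t * h i)"
        using bound by simp
      also have "\<dots> = 2 * t * c + t^2 * d"
      proof -
        have e1: "qf a n (\<lambda>i. g i + t * h i) = qf a n g + 2 * t * bil a n g h + t^2 * qf a n h"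
          by (rule qf_expand) (rule sym)
        show ?thesis unfolding e1 nf_expand c_def d_def using ng
          by (simp add: \<mu>_def[symmetric] algebra_simps)
      qed
      finally show ?thesis .
    qed
    then have "c = 0" by (rule quad_nonneg_zero)
    moreover have "(\<Sum>i<n. g i * h i) = g k"
    proof -
      have "(\<Sum>i<n. g i * h i) = (\<Sum>i<n. if i = k then g i else 0)"
        by (rule sum.cong) (auto simp: h_def)
      also have "\<dots> = g k" using k by (subst sum.delta) auto
      finally show ?thesis .
    qed
    moreover have "bil a n g h = (\<Sum>j<n. a k j * g j)"
    proof -
      have "bil a n g h = (\<Sum>i<n. \<Sum>j<n. if j = k then a i j * g i else 0)" unfolding bil_def
        by (intro sum.cong) (auto simp: h_def)
      also have "\<dots> = (\<Sum>i<n. a i k * g i)" using k by (intro sum.cong refl) (subst sum.delta, auto)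
      also have "\<dots> = (\<Sum>j<n. a k j * g j)" using sym k by (intro sum.cong) auto
      finally show ?thesis .
    qed
    ultimately show ?thesis unfolding c_def by simp
  qed
  have "\<exists>k<n. g k \<noteq> 0"
  proof (rule ccontr)
    assume "\<not> ?thesis"
    then have "nf n g = 0" unfolding nf_def by simp
    then show False using ng by simp
  qed
  then show ?thesis using eig bound by blast
qed



lemma gdist_refl: "gdist E u u = 0"
  unfolding gdist_def by (rule Least_eq_0) (rule exI[of _ "[u]"], simp add: is_walk_def)

lemma walk_rev:
  assumes sg: "simple_graph n E" and w: "is_walk E xs"
  shows "is_walk E (rev xs)"
  unfolding is_walk_def
proof (intro conjI allI impI)
  show "rev xs \<noteq> []" using w by (simp add: is_walk_def)
  fix i assume i: "Suc i < length (rev xs)"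
  define m where "m = length xs - Suc (Suc i)"
  have m: "Suc m < length xs" "Suc m = length xs - Suc i" using i unfolding m_def by auto
  have "E (xs ! m) (xs ! Suc m)" using w m(1) by (simp add: is_walk_def)
  then have "E (xs ! Suc m) (xs ! m)" using sg by (simp add: simple_graph_def)
  moreover have "rev xs ! i = xs ! Suc m" using i m by (simp add: rev_nth)
  moreover have "rev xs ! Suc i = xs ! m" using i m unfolding m_def by (simp add: rev_nth)
  ultimately show "E (rev xs ! i) (rev xs ! Suc i)" by simp
qed

lemma gdist_sym:
  assumes sg: "simple_graph n E"
  shows "gdist E u v = gdist E v u"
proof -
  have "(\<exists>xs. is_walk E xs \<and> length xs = Suc k \<and> hd xs = u \<and> last xs = v)
      \<longleftrightarrow> (\<exists>xs. is_walk E xs \<and> length xs = Suc k \<and> hd xs = v \<and> last xs = u)" for k u v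
  proof -
    have *: "\<exists>xs. is_walk E xs \<and> length xs = Suc k \<and> hd xs = v \<and> last xs = u"
      if "is_walk E xs" "length xs = Suc k" "hd xs = u" "last xs = v" for xs u v
    proof -
      have ne: "xs \<noteq> []" using that by (auto simp: is_walk_def)
      show ?thesis
        by (rule exI[of _ "rev xs"]) (use that ne walk_rev[OF sg] in \<open>auto simp: hd_rev last_rev\<close>)
    qed
    show ?thesis using * by metis
  qed
  then show ?thesis unfolding gdist_def by simp
qed

lemma walk1: "length xs = Suc 0 \<Longrightarrow> hd xs = last xs"
  by (cases xs) auto

lemma gdist_edge:
  assumes sg: "simple_graph n E" and e: "E u v"
  shows "gdist E u v = 1"
  unfolding gdist_def
proof (rule Least_equality)
  show "\<exists>xs. is_walk E xs \<and> length xs = Suc 1 \<and> hd xs = u \<and> last xs = v"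
    by (rule exI[of _ "[u,v]"]) (use e in \<open>auto simp: is_walk_def\<close>)
  have uv: "u \<noteq> v" using sg e by (auto simp: simple_graph_def)
  fix k assume "\<exists>xs. is_walk E xs \<and> length xs = Suc k \<and> hd xs = u \<and> last xs = v"
  then obtain xs where "length xs = Suc k" "hd xs = u" "last xs = v" by blast
  then show "1 \<le> k" using uv walk1[of xs] by (cases k) auto
qed

lemma gdist_two:
  assumes sg: "simple_graph n E" and bp: "bipartite_graph n E"
    and e1: "E v u" and e2: "E v w" and uw: "u \<noteq> w"
  shows "gdist E u w = 2"
  unfolding gdist_def
proof (rule Least_equality)
  have eu: "E u v" using sg e1 by (auto simp: simple_graph_def)
  have "is_walk E [u,v,w]" unfolding is_walk_def
  proof (intro conjI allI impI)
    fix i assume "Suc i < length [u,v,w]"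
    then have "i = 0 \<or> i = 1" by auto
    then show "E ([u,v,w] ! i) ([u,v,w] ! Suc i)" using eu e2 by auto
  qed simp
  then show "\<exists>xs. is_walk E xs \<and> length xs = Suc 2 \<and> hd xs = u \<and> last xs = w"
    by (intro exI[of _ "[u,v,w]"]) auto
  fix k assume "\<exists>xs. is_walk E xs \<and> length xs = Suc k \<and> hd xs = u \<and> last xs = w"
  then obtain xs where w: "is_walk E xs" "length xs = Suc k" "hd xs = u" "last xs = w" by blast
  show "2 \<le> k"
  proof (rule ccontr)
    assume "\<not> 2 \<le> k"
    then have "k = 0 \<or> k = 1" by auto
    then show False
    proof
      assume "k = 0" then show False using w uw walk1[of xs] by auto
    next
      assume k1: "k = 1"
      then obtain x y where xs: "xs = [x,y]" using w(2)
        by (cases xs; cases "tl xs") auto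
      have "E u w" using w xs by (auto simp: is_walk_def)
      moreover obtain A where A: "\<forall>a<n. \<forall>b<n. E a b \<longrightarrow> (a \<in> A \<longleftrightarrow> b \<notin> A)"
        using bp by (auto simp: bipartite_graph_def)
      moreover have "u < n" "v < n" "w < n" using sg e1 e2 by (auto simp: simple_graph_def)
      ultimately show False using e1 e2 by metis
    qed
  qed
qed



lemma kernel2:
  fixes p q s11 s12 s22 l :: real
  assumes p: "p > 0" and q: "q > 0"
    and eq: "(p*q) * l^2 - (q*s11 + p*s22) * l - (s12^2 - s11*s22) = 0"
  shows "\<exists>y1 y2. p*y1^2 + q*y2^2 > 0 \<and> s11*y1^2 + 2*s12*y1*y2 + s22*y2^2 = l * (p*y1^2 + q*y2^2)"
proof -
  define \<alpha> where "\<alpha> = s11 - l*p"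
  define \<beta> where "\<beta> = s22 - l*q"
  have ab: "\<alpha> * \<beta> = s12^2" using eq unfolding \<alpha>_def \<beta>_def
    by (simp add: algebra_simps power2_eq_square)
  have key: "\<exists>y1 y2. (y1 \<noteq> 0 \<or> y2 \<noteq> 0) \<and> s11*y1 + s12*y2 = l*p*y1 \<and> s12*y1 + s22*y2 = l*q*y2"
  proof (cases "s12 = 0 \<and> \<alpha> = 0")
    case True
    then show ?thesis unfolding \<alpha>_def by (intro exI[of _ 1] exI[of _ 0]) simp
  next
    case False
    have c1: "s12 \<noteq> 0 \<or> -\<alpha> \<noteq> 0" using False by auto
    have c2: "s11*s12 + s12*(-\<alpha>) = l*p*s12" unfolding \<alpha>_def by (simp add: algebra_simps)
    have "s12*s12 + s22*(-\<alpha>) - l*q*(-\<alpha>) = s12^2 - \<alpha>*\<beta>" unfolding \<beta>_def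
      by (simp add: algebra_simps power2_eq_square)
    then have c3: "s12*s12 + s22*(-\<alpha>) = l*q*(-\<alpha>)" using ab by simp
    show ?thesis using c1 c2 c3 by blast
  qed
  then obtain y1 y2 where y: "y1 \<noteq> 0 \<or> y2 \<noteq> 0" "s11*y1 + s12*y2 = l*p*y1" "s12*y1 + s22*y2 = l*q*y2"
    by blast
  have "p*y1^2 + q*y2^2 > 0"
  proof -
    have "p*y1^2 \<ge> 0" "q*y2^2 \<ge> 0" using p q by auto
    moreover have "p*y1^2 > 0 \<or> q*y2^2 > 0" using y(1) p q by auto
    ultimately show ?thesis by linarith
  qed
  moreover have "s11*y1^2 + 2*s12*y1*y2 + s22*y2^2 = y1*(s11*y1 + s12*y2) + y2*(s12*y1 + s22*y2)"
    by (simp add: algebra_simps power2_eq_square)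
  then have "s11*y1^2 + 2*s12*y1*y2 + s22*y2^2 = l * (p*y1^2 + q*y2^2)"
    using y by (simp add: algebra_simps power2_eq_square)
  ultimately show ?thesis by blast
qed

lemma root_eq:
  fixes a b c \<sigma> :: real
  assumes c: "c > 0" and D: "a^2 + 4*b*c \<ge> 0" and s: "\<sigma>^2 = 1"
  shows "c * ((a + \<sigma> * sqrt (a^2 + 4*b*c)) / (2*c))^2 - a * ((a + \<sigma> * sqrt (a^2 + 4*b*c)) / (2*c)) - b = 0"
proof -
  define r where "r = sqrt (a^2 + 4*b*c)"
  have r2: "r^2 = a^2 + 4*b*c" unfolding r_def using D by (rule real_sqrt_pow2)
  have "(\<sigma>*r)^2 = a^2 + 4*b*c" using r2 s by (simp add: power_mult_distrib)
  then have e: "\<sigma>^2*r^2 = a^2 + 4*b*c" by (simp add: power_mult_distrib)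
  have "c * ((a + \<sigma> * r) / (2*c))^2 - a * ((a + \<sigma> * r) / (2*c)) - b
      = ((a + \<sigma>*r)^2 - 2*a*(a + \<sigma>*r) - 4*b*c) / (4*c)"
    using c by (simp add: field_simps power2_eq_square)
  also have "(a + \<sigma>*r)^2 - 2*a*(a + \<sigma>*r) - 4*b*c = \<sigma>^2*r^2 - a^2 - 4*b*c"
    by (simp add: algebra_simps power2_eq_square)
  also have "\<dots> = 0" using e by simp
  finally show ?thesis unfolding r_def by simp
qed



lemma eig_to_eigenvalue:
  assumes nz: "\<exists>k<n. g k \<noteq> 0"
    and eq: "\<forall>k<n. (\<Sum>j<n. real (gdist E k j) * g j) = \<mu> * g k"
  shows "eigenvalue (dist_matrix n E) \<mu>"
proof -
  define w where "w = vec n g"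
  have dr: "dim_row (dist_matrix n E) = n" "dim_col (dist_matrix n E) = n"
    by (auto simp: dist_matrix_def)
  have w: "w \<in> carrier_vec n" unfolding w_def by simp
  have w0: "w \<noteq> 0\<^sub>v n"
  proof
    assume "w = 0\<^sub>v n"
    then have "\<forall>k<n. g k = 0" unfolding w_def by (metis index_vec index_zero_vec(1))
    then show False using nz by auto
  qed
  have "dist_matrix n E *\<^sub>v w = \<mu> \<cdot>\<^sub>v w"
  proof (rule eq_vecI)
    fix i assume i: "i < dim_vec (\<mu> \<cdot>\<^sub>v w)"
    then have i': "i < n" unfolding w_def by simp
    have "(dist_matrix n E *\<^sub>v w) $ i = (\<Sum>j<n. real (gdist E i j) * g j)"
      using i' by (simp add: dist_matrix_def w_def scalar_prod_def lessThan_atLeast0)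
    also have "\<dots> = \<mu> * g i" using eq i' by simp
    finally show "(dist_matrix n E *\<^sub>v w) $ i = (\<mu> \<cdot>\<^sub>v w) $ i" using i' by (simp add: w_def)
  qed (simp add: dist_matrix_def w_def)
  then show ?thesis unfolding eigenvalue_def eigenvector_def using w w0 dr by auto
qed

lemma eig_finite: "finite {k. eigenvalue (dist_matrix n E) k}"
proof -
  have A: "dist_matrix n E \<in> carrier_mat n n" by (simp add: dist_matrix_def)
  have "char_poly (dist_matrix n E) \<noteq> 0"
    using degree_monic_char_poly[OF A] by auto
  then have "finite {k. poly (char_poly (dist_matrix n E)) k = 0}" by (rule poly_roots_finite)
  then show ?thesis using eigenvalue_root_char_poly[OF A] by simp
qed

lemma sum_ind:
  assumes "X \<subseteq> {..<(n::nat)}"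
  shows "(\<Sum>j<n. if j \<in> X then h j else 0) = sum h X"
proof -
  have "sum h ({..<n} \<inter> X) = (\<Sum>j<n. if j \<in> X then h j else 0)" by (rule sum.inter_restrict) simp
  moreover have "{..<n} \<inter> X = X" using assms by auto
  ultimately show ?thesis by simp
qed

lemma vertex_bound:
  assumes sg: "simple_graph n E" and bp: "bipartite_graph n E" and v: "v < n"
    and dg: "degree n E v \<le> n - 2" and n3: "n \<ge> 3"
  defines "\<Delta> \<equiv> real (degree n E v)" and "S \<equiv> (\<Sum>j<n. transmission n E j)"
  defines "a \<equiv> (\<Delta> + 1) * (S - 2 * transmission n E v - 2 * tval n E v * \<Delta>) + 2 * real n * \<Delta>^2"
    and "b \<equiv> (transmission n E v)^2 - 2 * S * \<Delta>^2 + 2 * transmission n E v * tval n E v * \<Delta>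
             + (tval n E v)^2 * \<Delta>^2"
    and "c \<equiv> (1 + \<Delta>) * (real n - \<Delta> - 1)"
  shows "(a + sqrt (a^2 + 4 * b * c)) / (2 * c) \<le> rhoD n E
       \<and> rhoD_min n E \<le> (a - sqrt (a^2 + 4 * b * c)) / (2 * c)"
proof -
  define d where "d i j = real (gdist E i j)" for i j
  have dsym: "d i j = d j i" for i j unfolding d_def using gdist_sym[OF sg] by simp
  have d0: "d i i = 0" for i unfolding d_def by (simp add: gdist_refl)
  define r where "r i = (\<Sum>j<n. d i j)" for i
  have r: "transmission n E i = r i" if "i < n" for i
  proof -
    have "sum (d i) {0..<n} = d i i + sum (d i) ({0..<n} - {i})"
      using that by (intro sum.remove) auto
    then show ?thesis unfolding transmission_def r_def d_def[symmetric]
      using d0 by (simp add: lessThan_atLeast0)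
  qed
  have S: "S = (\<Sum>i<n. r i)" unfolding S_def using r by simp
  define Nv where "Nv = {u. u < n \<and> E v u}"
  define X where "X = insert v Nv"
  have finN: "finite Nv" unfolding Nv_def by simp
  have vN: "v \<notin> Nv" using sg unfolding Nv_def simple_graph_def by auto
  have cN: "card Nv = degree n E v" unfolding Nv_def degree_def by simp
  have Xsub: "X \<subseteq> {..<n}" unfolding X_def Nv_def using v by auto
  have finX: "finite X" unfolding X_def using finN by simp
  have cX: "card X = degree n E v + 1" unfolding X_def using finN vN cN by simp
  have Dt: "\<Delta> * tval n E v = (\<Sum>u\<in>Nv. r u)"
  proof (cases "degree n E v = 0")
    case True
    then have "Nv = {}" using cN finN by simp
    then show ?thesis unfolding \<Delta>_def using True by simp
  next
    case False
    have "(\<Sum>u\<in>Nv. transmission n E u) = (\<Sum>u\<in>Nv. r u)"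
      using r unfolding Nv_def by (intro sum.cong) auto
    then show ?thesis unfolding \<Delta>_def tval_def using False by (simp add: Nv_def[symmetric])
  qed
  define TX where "TX = (\<Sum>i\<in>X. r i)"
  have TX: "TX = transmission n E v + \<Delta> * tval n E v"
    unfolding TX_def X_def using finN vN Dt r[OF v] by simp
  define s11 where "s11 = (\<Sum>i\<in>X. \<Sum>j\<in>X. d i j)"
  have rowv: "(\<Sum>j\<in>X. d v j) = \<Delta>"
  proof -
    have "(\<Sum>j\<in>Nv. d v j) = (\<Sum>j\<in>Nv. 1)"
      by (intro sum.cong) (auto simp: Nv_def d_def gdist_edge[OF sg])
    then show ?thesis unfolding X_def using finN vN d0 cN \<Delta>_def by simp
  qed
  have rowu: "(\<Sum>j\<in>X. d u j) = 2 * \<Delta> - 1" if u: "u \<in> Nv" for u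
  proof -
    have "(\<Sum>j\<in>Nv. d u j) = (\<Sum>j\<in>Nv. 2 - (if j = u then 2 else 0))"
    proof (intro sum.cong refl)
      fix j assume j: "j \<in> Nv"
      show "d u j = 2 - (if j = u then 2 else 0)"
      proof (cases "j = u")
        case True then show ?thesis using d0 by simp
      next
        case False
        then have "gdist E u j = 2" using u j
          by (intro gdist_two[OF sg bp, of v]) (auto simp: Nv_def)
        then show ?thesis using False unfolding d_def by simp
      qed
    qed
    also have "\<dots> = 2 * \<Delta> - 2" using finN u cN
      by (simp add: sum_subtractf sum.delta \<Delta>_def)
    finally have "(\<Sum>j\<in>Nv. d u j) = 2 * \<Delta> - 2" .
    moreover have "d u v = 1" using u unfolding d_def Nv_def
      by (subst gdist_sym[OF sg]) (simp add: gdist_edge[OF sg])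
    ultimately show ?thesis unfolding X_def using finN vN by simp
  qed
  have s11: "s11 = 2 * \<Delta>^2"
  proof -
    have "s11 = \<Delta> + (\<Sum>u\<in>Nv. 2 * \<Delta> - 1)"
      unfolding s11_def using finN vN rowv rowu by (simp add: X_def[symmetric]) (simp add: X_def)
    also have "\<dots> = 2 * \<Delta>^2" using cN by (simp add: \<Delta>_def power2_eq_square algebra_simps)
    finally show ?thesis .
  qed
  define p where "p = 1 + \<Delta>"
  define q where "q = real n - \<Delta> - 1"
  have p: "p > 0" unfolding p_def \<Delta>_def by simp
  have q: "q > 0" unfolding q_def \<Delta>_def using dg n3 by linarith
  define s12 where "s12 = TX - s11"
  define s22 where "s22 = S - 2 * TX + s11"
  have test: "qf d n (\<lambda>i. if i \<in> X then y1 else y2) = s11*y1^2 + 2*s12*y1*y2 + s22*y2^2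
            \<and> nf n (\<lambda>i. if i \<in> X then y1 else y2) = p*y1^2 + q*y2^2" for y1 y2
  proof
    define z where "z = y1 - y2"
    define f where "f i = (if i \<in> X then y1 else y2)" for i
    define cc where "cc i = (\<Sum>j\<in>X. d i j)" for i
    have inner: "(\<Sum>j<n. d i j * f j) = y2 * r i + z * cc i" for i
    proof -
      have "(\<Sum>j<n. d i j * f j) = (\<Sum>j<n. y2 * d i j + z * (if j \<in> X then d i j else 0))"
        by (intro sum.cong) (auto simp: f_def z_def algebra_simps)
      also have "\<dots> = y2 * r i + z * cc i"
        by (simp add: sum.distrib sum_distrib_left[symmetric] r_def cc_def sum_ind[OF Xsub])
      finally show ?thesis .
    qed
    have "qf d n f = (\<Sum>i<n. f i * (\<Sum>j<n. d i j * f j))"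
      unfolding qf_def by (intro sum.cong refl) (simp add: sum_distrib_left mult_ac)
    also have "\<dots> = (\<Sum>i<n. y2 * (y2 * r i + z * cc i) + z * (if i \<in> X then y2 * r i + z * cc i else 0))"
      unfolding inner by (intro sum.cong) (auto simp: f_def z_def algebra_simps)
    also have "\<dots> = y2^2 * (\<Sum>i<n. r i) + y2 * z * (\<Sum>i<n. cc i) + z * y2 * TX + z^2 * s11"
      by (simp add: sum.distrib sum_distrib_left[symmetric] sum_ind[OF Xsub] TX_def s11_def cc_def
          power2_eq_square algebra_simps)
    also have "(\<Sum>i<n. cc i) = TX"
    proof -
      have "(\<Sum>i<n. cc i) = (\<Sum>j\<in>X. \<Sum>i<n. d i j)" unfolding cc_def by (rule sum.swap)
      also have "\<dots> = TX" unfolding TX_def r_def using dsym by simp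
      finally show ?thesis .
    qed
    finally have "qf d n f = y2^2 * S + 2 * y2 * z * TX + z^2 * s11" using S by (simp add: algebra_simps)
    then show "qf d n (\<lambda>i. if i \<in> X then y1 else y2) = s11*y1^2 + 2*s12*y1*y2 + s22*y2^2"
      unfolding f_def[abs_def] s12_def s22_def z_def by (simp add: algebra_simps power2_eq_square)
    have "nf n f = (\<Sum>i<n. if i \<in> X then y1^2 else y2^2)" unfolding nf_def f_def
      by (intro sum.cong) auto
    also have "\<dots> = real (card X) * y1^2 + real (card ({..<n} - X)) * y2^2"
      using Xsub by (simp add: sum.If_cases inf_absorb2 Diff_eq)
    also have "card ({..<n} - X) = n - card X" using Xsub finX by (simp add: card_Diff_subset)
    finally show "nf n (\<lambda>i. if i \<in> X then y1 else y2) = p*y1^2 + q*y2^2"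
      unfolding f_def[abs_def] p_def q_def \<Delta>_def using cX Xsub card_mono[OF _ Xsub]
      by (simp add: of_nat_diff)
  qed
  have a: "a = q * s11 + p * s22" unfolding a_def q_def p_def s22_def s11 TX
    by (simp add: algebra_simps power2_eq_square)
  have b: "b = s12^2 - s11 * s22" unfolding b_def s12_def s22_def s11 TX
    by (simp add: algebra_simps power2_eq_square)
  have c: "c = p * q" unfolding c_def p_def q_def by simp
  have cpos: "c > 0" using p q c by simp
  have disc: "a^2 + 4*b*c \<ge> 0"
  proof -
    have "a^2 + 4*b*c = (q*s11 - p*s22)^2 + 4*p*q*s12^2" unfolding a b c
      by (simp add: algebra_simps power2_eq_square)
    then show ?thesis using p q by simp
  qed
  have dsym': "\<And>i j. i < n \<Longrightarrow> j < n \<Longrightarrow> d i j = d j i" using dsym by simp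
  have n0: "n > 0" using n3 by simp
  obtain \<mu> g where g: "\<exists>k<n. g k \<noteq> 0" "\<forall>k<n. (\<Sum>j<n. d k j * g j) = \<mu> * g k"
      and \<mu>: "\<forall>f. qf d n f \<le> \<mu> * nf n f"
    using max_eig_fun[where a=d and n=n, OF dsym' n0] by blast
  have "eigenvalue (dist_matrix n E) \<mu>"
    using g unfolding d_def by (rule eig_to_eigenvalue)
  then have rho: "\<mu> \<le> rhoD n E" unfolding rhoD_def using eig_finite by (intro Max_ge) auto
  have nsym: "\<And>i j. i < n \<Longrightarrow> j < n \<Longrightarrow> - d i j = - d j i" using dsym by simp
  obtain \<mu>' g' where g': "\<exists>k<n. g' k \<noteq> 0" "\<forall>k<n. (\<Sum>j<n. - d k j * g' j) = \<mu>' * g' k"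
      and \<mu>': "\<forall>f. qf (\<lambda>i j. - d i j) n f \<le> \<mu>' * nf n f"
    using max_eig_fun[where a="\<lambda>i j. - d i j" and n=n, OF nsym n0] by blast
  have geq: "\<forall>k<n. (\<Sum>j<n. real (gdist E k j) * g' j) = (- \<mu>') * g' k"
  proof (intro allI impI)
    fix k assume "k < n"
    then have "(\<Sum>j<n. - d k j * g' j) = \<mu>' * g' k" using g' by blast
    then show "(\<Sum>j<n. real (gdist E k j) * g' j) = (- \<mu>') * g' k"
      unfolding d_def by (simp add: sum_negf)
  qed
  have "eigenvalue (dist_matrix n E) (- \<mu>')" using g'(1) geq by (rule eig_to_eigenvalue)
  then have rhom: "rhoD_min n E \<le> - \<mu>'" unfolding rhoD_min_def using eig_finite by (intro Min_le) auto
  have bound: "l \<le> \<mu> \<and> - \<mu>' \<le> l" if root: "c * l^2 - a * l - b = 0" for l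
  proof -
    have "(p*q) * l^2 - (q*s11 + p*s22) * l - (s12^2 - s11*s22) = 0" using root unfolding a b c .
    from kernel2[OF p q this] obtain y1 y2 where
      y: "p*y1^2 + q*y2^2 > 0" "s11*y1^2 + 2*s12*y1*y2 + s22*y2^2 = l * (p*y1^2 + q*y2^2)" by blast
    define f where "f i = (if i \<in> X then y1 else y2)" for i
    have qf: "qf d n f = l * nf n f" and nfp: "nf n f > 0"
      using test[of y1 y2] y unfolding f_def[abs_def] by auto
    have "l * nf n f \<le> \<mu> * nf n f" using \<mu> qf by metis
    then have 1: "l \<le> \<mu>" using nfp by simp
    have "qf (\<lambda>i j. - d i j) n f = - qf d n f" unfolding qf_def by (simp add: sum_negf)
    then have "- l * nf n f \<le> \<mu>' * nf n f" using \<mu>' qf by (metis mult_minus_left)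
    then have "- l \<le> \<mu>'" using nfp by (metis mult_le_cancel_right_pos mult_minus_left)
    then show ?thesis using 1 by simp
  qed
  have r1: "c * ((a + 1 * sqrt (a^2 + 4*b*c)) / (2*c))^2 - a * ((a + 1 * sqrt (a^2 + 4*b*c)) / (2*c)) - b = 0"
    by (rule root_eq[OF cpos disc]) simp
  have r2: "c * ((a + (-1) * sqrt (a^2 + 4*b*c)) / (2*c))^2 - a * ((a + (-1) * sqrt (a^2 + 4*b*c)) / (2*c)) - b = 0"
    by (rule root_eq[OF cpos disc]) simp
  have "(a + sqrt (a^2 + 4 * b * c)) / (2 * c) \<le> \<mu>" using bound[OF r1] by simp
  moreover have "- \<mu>' \<le> (a - sqrt (a^2 + 4 * b * c)) / (2 * c)" using bound[OF r2] by simp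
  ultimately show ?thesis using rho rhom by linarith
qed



lemma vertex_bound2:
  assumes sg: "simple_graph n E" and bp: "bipartite_graph n E" and v: "v < n"
    and dm: "degree n E v = md" and dg: "md \<le> n - 2" and n3: "n \<ge> 3"
  shows "let \<Delta> = real md;
             S = (\<Sum>j<n. transmission n E j);
             a = (\<Delta> + 1) * (S - 2 * transmission n E v - 2 * tval n E v * \<Delta>) + 2 * real n * \<Delta>^2;
             b = (transmission n E v)^2 - 2 * S * \<Delta>^2
                        + 2 * transmission n E v * tval n E v * \<Delta> + (tval n E v)^2 * \<Delta>^2;
             c = (1 + \<Delta>) * (real n - \<Delta> - 1)
         in (a + sqrt (a^2 + 4 * b * c)) / (2 * c) \<le> rhoD n E
          \<and> rhoD_min n E \<le> (a - sqrt (a^2 + 4 * b * c)) / (2 * c)"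
  using vertex_bound[OF sg bp v _ n3] dm dg unfolding Let_def by simp

theorem corollary3p3:
  fixes n :: nat and E :: "nat \<Rightarrow> nat \<Rightarrow> bool" and K :: "nat set"
  assumes "simple_graph n E" and "connected_graph n E" and "bipartite_graph n E"
    and "n \<ge> 3" and "max_degree n E \<le> n - 2"
    and "K \<subseteq> {0..<n}" and "K \<noteq> {}"
    and "\<forall>v\<in>K. degree n E v = max_degree n E"
  shows "let \<Delta> = real (max_degree n E);
             S = (\<Sum>j<n. transmission n E j);
             a = (\<lambda>i. (\<Delta> + 1) * (S - 2 * transmission n E i - 2 * tval n E i * \<Delta>)
                        + 2 * real n * \<Delta>^2);
             b = (\<lambda>i. (transmission n E i)^2 - 2 * S * \<Delta>^2
                        + 2 * transmission n E i * tval n E i * \<Delta> + (tval n E i)^2 * \<Delta>^2);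
             c = (1 + \<Delta>) * (real n - \<Delta> - 1)
         in rhoD n E \<ge> Max ((\<lambda>i. (a i + sqrt ((a i)^2 + 4 * b i * c)) / (2 * c)) ` K)
          \<and> rhoD_min n E \<le> Min ((\<lambda>i. (a i - sqrt ((a i)^2 + 4 * b i * c)) / (2 * c)) ` K)"
proof -
  have fin: "finite K" using assms(6) finite_subset by blast
  have vb: "\<And>i. i \<in> K \<Longrightarrow> (let \<Delta> = real (max_degree n E);
             S = (\<Sum>j<n. transmission n E j);
             a = (\<Delta> + 1) * (S - 2 * transmission n E i - 2 * tval n E i * \<Delta>) + 2 * real n * \<Delta>^2;
             b = (transmission n E i)^2 - 2 * S * \<Delta>^2
                        + 2 * transmission n E i * tval n E i * \<Delta> + (tval n E i)^2 * \<Delta>^2;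
             c = (1 + \<Delta>) * (real n - \<Delta> - 1)
         in (a + sqrt (a^2 + 4 * b * c)) / (2 * c) \<le> rhoD n E
          \<and> rhoD_min n E \<le> (a - sqrt (a^2 + 4 * b * c)) / (2 * c))"
    using vertex_bound2[OF assms(1) assms(3) _ _ assms(5) assms(4)] assms(6,8) by auto
  show ?thesis unfolding Let_def
    by (intro conjI Max.boundedI Min.boundedI) (use fin assms(7) vb in \<open>auto simp: Let_def\<close>)
qed


end
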